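(* Let $\bar u\in L^\infty(\Omega)\cap U_{ad}$ be a local solution of the problem $\min_{u\in U_{ad}} f(u)+g(u)$ with respect to the $L^p(\Omega)$-topology for some $1\le p<\infty$ (i.e. $f(\bar u)+g(\bar u)\le f(u)+g(u)$ for all $u\in U_{ad}$ with $\|u-\bar u\|_{L^p(\Omega)}$ sufficiently small). Assume that $$f(u)-f(\bar u)=\int_\Omega \nabla f(\bar u)(u-\bar u)\,dx+o(\|u-\bar u\|_{L^1(\Omega)})\quad\text{as }\|u-\bar u\|_{L^1(\Omega)}\to0,\ u\in U_{ad}.$$ Then for almost every $x\in\Omega$, $$\bar u(x)\in\operatorname*{arg\,min}_{v\in\mathbb R,\ |v|\le b}\Big(\nabla f(\bar u)(x)\, v+\frac\alpha2 v^2+\beta|v|_0\Big).$$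
   Context: Let $\Omega\subset\mathbb R^n$ be a bounded open set with Lebesgue measure. Fix $\alpha\ge0$, $\beta>0$, $b\in(0,+\infty]$ and set $U_{ad}:=\{v\in L^2(\Omega): |v(x)|\le b\text{ a.e. in }\Omega\}$. For $t\in\mathbb R$ let $|t|_0:=0$ if $t=0$ and $|t|_0:=1$ if $t\ne0$; for measurable $u$ let $\|u\|_0:=\operatorname{meas}\{x\in\Omega:u(x)\ne0\}$. Define $g(u):=\frac\alpha2\|u\|_{L^2(\Omega)}^2+\beta\|u\|_0$. The function $f:L^2(\Omega)\to\mathbb R$ is Fréchet differentiable, and $\nabla f(u)\in L^2(\Omega)$ denotes the Riesz representative of its derivative, i.e. $f'(u)h=\int_\Omega\nabla f(u)h\,dx$. *)

theory Defs
  imports "HOL-Analysis.Analysis"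
begin

text \<open>All function spaces are over the measure space (Omega, Lebesgue measure restricted to Omega).
  Elements of L2 are represented by measurable real functions; f acts on representatives.\<close>

definition L2 :: "'a::euclidean_space set \<Rightarrow> ('a \<Rightarrow> real) set" where
  "L2 \<Omega> = {u. u \<in> borel_measurable (lebesgue_on \<Omega>) \<and>
                 integrable (lebesgue_on \<Omega>) (\<lambda>x. (u x)^2)}"

definition L2_norm :: "'a::euclidean_space set \<Rightarrow> ('a \<Rightarrow> real) \<Rightarrow> real" where
  "L2_norm \<Omega> u = sqrt (LINT x|lebesgue_on \<Omega>. (u x)^2)"

definition L1_norm :: "'a::euclidean_space set \<Rightarrow> ('a \<Rightarrow> real) \<Rightarrow> real" where
  "L1_norm \<Omega> u = (LINT x|lebesgue_on \<Omega>. \<bar>u x\<bar>)"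

definition Lp_norm :: "'a::euclidean_space set \<Rightarrow> real \<Rightarrow> ('a \<Rightarrow> real) \<Rightarrow> ereal" where
  "Lp_norm \<Omega> p u =
     (if integrable (lebesgue_on \<Omega>) (\<lambda>x. \<bar>u x\<bar> powr p)
      then ereal ((LINT x|lebesgue_on \<Omega>. \<bar>u x\<bar> powr p) powr (1/p))
      else \<infinity>)"

definition Uad :: "'a::euclidean_space set \<Rightarrow> ereal \<Rightarrow> ('a \<Rightarrow> real) set" where
  "Uad \<Omega> b = {v \<in> L2 \<Omega>. AE x in lebesgue_on \<Omega>. ereal \<bar>v x\<bar> \<le> b}"

definition Linfty :: "'a::euclidean_space set \<Rightarrow> ('a \<Rightarrow> real) set" where
  "Linfty \<Omega> = {u. u \<in> borel_measurable (lebesgue_on \<Omega>) \<and>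
                    (\<exists>C. AE x in lebesgue_on \<Omega>. \<bar>u x\<bar> \<le> C)}"

definition card0 :: "real \<Rightarrow> real" where
  "card0 t = (if t = 0 then 0 else 1)"

definition L0_norm :: "'a::euclidean_space set \<Rightarrow> ('a \<Rightarrow> real) \<Rightarrow> real" where
  "L0_norm \<Omega> u = measure lebesgue {x \<in> \<Omega>. u x \<noteq> 0}"

definition gfun :: "'a::euclidean_space set \<Rightarrow> real \<Rightarrow> real \<Rightarrow> ('a \<Rightarrow> real) \<Rightarrow> real" where
  "gfun \<Omega> \<alpha> \<beta> u = \<alpha> / 2 * (L2_norm \<Omega> u)^2 + \<beta> * L0_norm \<Omega> u"

text \<open>G in L2 is the Riesz representative of the Frechet derivative of f at u (w.r.t. the L2 norm).\<close>
definition frechet_grad ::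
  "'a::euclidean_space set \<Rightarrow> (('a \<Rightarrow> real) \<Rightarrow> real) \<Rightarrow> ('a \<Rightarrow> real) \<Rightarrow> ('a \<Rightarrow> real) \<Rightarrow> bool" where
  "frechet_grad \<Omega> f u G \<longleftrightarrow> G \<in> L2 \<Omega> \<and>
     (\<forall>\<epsilon>>0. \<exists>\<delta>>0. \<forall>v \<in> L2 \<Omega>. L2_norm \<Omega> (\<lambda>x. v x - u x) < \<delta> \<longrightarrow>
        \<bar>f v - f u - (LINT x|lebesgue_on \<Omega>. G x * (v x - u x))\<bar>
          \<le> \<epsilon> * L2_norm \<Omega> (\<lambda>x. v x - u x))"

definition pw_obj :: "real \<Rightarrow> real \<Rightarrow> real \<Rightarrow> real \<Rightarrow> real" where
  "pw_obj \<alpha> \<beta> q v = q * v + \<alpha> / 2 * v^2 + \<beta> * card0 v"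

definition pw_argmin :: "real \<Rightarrow> real \<Rightarrow> ereal \<Rightarrow> real \<Rightarrow> real set" where
  "pw_argmin \<alpha> \<beta> b q = {w. ereal \<bar>w\<bar> \<le> b \<and>
      (\<forall>v. ereal \<bar>v\<bar> \<le> b \<longrightarrow> pw_obj \<alpha> \<beta> q w \<le> pw_obj \<alpha> \<beta> q v)}"

end

theory Submission imports Defs begin

lemma small_subset:
  fixes A :: "'a::euclidean_space set"
  assumes A: "A \<in> sets lebesgue" "A \<notin> null_sets lebesgue" and eta: "\<eta> > 0"
  shows "\<exists>E. E \<subseteq> A \<and> E \<in> sets lebesgue \<and> 0 < measure lebesgue E \<and> measure lebesgue E < \<eta>"
proof -
  define V where "V = unit_ball_vol (real DIM('a))"
  have cb: "measure lborel (ball (c::'a) r) = V * r ^ DIM('a)" if "r \<ge> 0" for c r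
    unfolding V_def using content_ball that by blast
  have V0: "V \<ge> 0" using cb[where c=0 and r=1] measure_nonneg[of lborel "ball (0::'a) 1"] by simp
  define r where "r = min (1/2) (\<eta> / (2 * (V + 1)))"
  have r0: "r > 0" using eta V0 by (simp add: r_def)
  have r1: "r \<le> 1" by (simp add: r_def)
  have "r ^ DIM('a) \<le> r ^ 1"
    by (rule power_decreasing) (use r0 r1 DIM_positive in \<open>auto simp: Suc_le_eq\<close>)
  hence "V * r ^ DIM('a) \<le> V * r" using V0 by (simp add: mult_left_mono)
  also have "V * r \<le> V * (\<eta> / (2 * (V + 1)))" using V0 by (intro mult_left_mono) (auto simp: r_def)
  also have "\<dots> < \<eta>" using V0 eta by (simp add: field_simps) (smt (verit) mult_nonneg_nonneg)
  finally have small: "V * r ^ DIM('a) < \<eta>" .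
  obtain D :: "'a set" where D: "countable D" "\<And>X. open X \<Longrightarrow> X \<noteq> {} \<Longrightarrow> \<exists>d \<in> D. d \<in> X"
    by (rule countable_dense_setE) blast
  have cov: "A = (\<Union>d\<in>D. A \<inter> ball d r)"
  proof (intro equalityI subsetI)
    fix x assume "x \<in> A"
    obtain d where "d \<in> D" "d \<in> ball x r" using D(2)[of "ball x r"] r0 by auto
    thus "x \<in> (\<Union>d\<in>D. A \<inter> ball d r)" using \<open>x \<in> A\<close> by (auto simp: dist_commute)
  qed auto
  have "\<exists>d\<in>D. A \<inter> ball d r \<notin> null_sets lebesgue"
  proof (rule ccontr)
    assume "\<not> ?thesis"
    hence "(\<Union>d\<in>D. A \<inter> ball d r) \<in> null_sets lebesgue"
      using D(1) by (intro null_sets_UN') auto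
    thus False using cov A(2) by simp
  qed
  then obtain d where d: "A \<inter> ball d r \<notin> null_sets lebesgue" by blast
  have Em: "A \<inter> ball d r \<in> sets lebesgue" using A(1) by (metis fmeasurableD fmeasurable_Int_fmeasurable inf_commute lmeasurable_ball)
  have Ef: "A \<inter> ball d r \<in> fmeasurable lebesgue"
    by (rule bounded_set_imp_lmeasurable) (use Em in auto)
  have "measure lebesgue (A \<inter> ball d r) \<le> measure lebesgue (ball d r)"
    by (rule measure_mono_fmeasurable) (auto simp: Em)
  also have "\<dots> = measure lborel (ball d r)" by (simp add: measure_completion)
  finally have "measure lebesgue (A \<inter> ball d r) < \<eta>" using cb[where c=d and r=r] r0 small by simp
  moreover have "0 < measure lebesgue (A \<inter> ball d r)"
    using Ef d negligible_iff_measure0 negligible_iff_null_sets zero_less_measure_iff by blast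
  ultimately show ?thesis using Em by (intro exI[of _ "A \<inter> ball d r"]) auto
qed

lemma pw_dense:
  assumes H: "\<And>r. r \<in> \<rat> \<Longrightarrow> ereal \<bar>r\<bar> \<le> b \<Longrightarrow> pw_obj \<alpha> \<beta> q w \<le> pw_obj \<alpha> \<beta> q r"
    and v: "ereal \<bar>v\<bar> \<le> b" and a: "\<alpha> \<ge> 0"
  shows "pw_obj \<alpha> \<beta> q w \<le> pw_obj \<alpha> \<beta> q v"
proof (cases "v = 0")
  case True thus ?thesis using H[of 0] v by simp
next
  case False
  show ?thesis
  proof (rule ccontr)
    assume "\<not> ?thesis"
    hence gap: "pw_obj \<alpha> \<beta> q v < pw_obj \<alpha> \<beta> q w" by simp
    define g where "g = pw_obj \<alpha> \<beta> q w - pw_obj \<alpha> \<beta> q v"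
    have g0: "g > 0" using gap by (simp add: g_def)
    define L where "L = \<bar>q\<bar> + \<alpha> * \<bar>v\<bar> + 1"
    have L0: "L > 0" unfolding L_def using a by (smt (verit) abs_ge_zero mult_nonneg_nonneg)
    define d where "d = min (g / L) \<bar>v\<bar>"
    have d0: "d > 0" using g0 L0 False by (simp add: d_def)
    obtain s where s: "s \<in> \<rat>" "\<bar>v\<bar> - d < s" "s < \<bar>v\<bar>"
      using Rats_dense_in_real[of "\<bar>v\<bar> - d" "\<bar>v\<bar>"] d0 by auto
    have s0: "s > 0" using s(2) by (simp add: d_def)
    define t where "t = sgn v * s"
    have tQ: "t \<in> \<rat>" using s(1) False by (auto simp: t_def sgn_if)
    have tabs: "\<bar>t\<bar> = s" using s0 False by (simp add: t_def abs_mult)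
    have tb: "ereal \<bar>t\<bar> \<le> b" using v s(3) tabs by (metis ereal_less_eq(3) less_imp_le order_trans)
    have tne: "t \<noteq> 0" using tabs s0 by auto
    have dist: "\<bar>t - v\<bar> = \<bar>v\<bar> - s"
      using s0 s(3) False by (auto simp: t_def sgn_if)
    have "pw_obj \<alpha> \<beta> q t - pw_obj \<alpha> \<beta> q v = (t - v) * (q + \<alpha>/2 * (t + v))"
      using tne False by (simp add: pw_obj_def card0_def field_simps power2_eq_square)
    also have "\<dots> \<le> \<bar>t - v\<bar> * \<bar>q + \<alpha>/2 * (t + v)\<bar>" by (metis abs_ge_self abs_mult)
    also have "\<bar>q + \<alpha>/2 * (t + v)\<bar> \<le> L"
    proof -
      have "\<bar>\<alpha>/2 * (t + v)\<bar> \<le> \<alpha>/2 * (\<bar>t\<bar> + \<bar>v\<bar>)" using a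
        by (simp add: abs_mult mult_left_mono abs_triangle_ineq)
      also have "\<dots> \<le> \<alpha> * \<bar>v\<bar>" using mult_left_mono[of "\<bar>t\<bar> + \<bar>v\<bar>" "2*\<bar>v\<bar>" "\<alpha>/2"] a tabs s(3) by simp
      finally show ?thesis unfolding L_def by linarith
    qed
    hence "\<bar>t - v\<bar> * \<bar>q + \<alpha>/2 * (t + v)\<bar> \<le> \<bar>t - v\<bar> * L" by (simp add: mult_left_mono)
    also have "\<bar>t - v\<bar> * L < d * L" using dist s(2) L0 by simp
    also have "d * L \<le> g" using L0 by (simp add: d_def min_def field_simps split: if_splits)
    finally have "pw_obj \<alpha> \<beta> q t < pw_obj \<alpha> \<beta> q w" by (simp add: g_def)
    thus False using H[OF tQ tb] by simp
  qed
qed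

theorem mainTheorem1:
  fixes \<Omega> :: "'a::euclidean_space set"
    and \<alpha> \<beta> p :: real and b :: ereal
    and f :: "('a \<Rightarrow> real) \<Rightarrow> real"
    and ubar G :: "'a \<Rightarrow> real"
  assumes "open \<Omega>" and "bounded \<Omega>"
    and "\<alpha> \<ge> 0" and "\<beta> > 0" and "b > 0"
    and f_ae: "\<And>u v. u \<in> L2 \<Omega> \<Longrightarrow> v \<in> L2 \<Omega> \<Longrightarrow> (AE x in lebesgue_on \<Omega>. u x = v x) \<Longrightarrow> f u = f v"
    and f_diff: "\<forall>u \<in> L2 \<Omega>. \<exists>H. frechet_grad \<Omega> f u H"
    and G: "frechet_grad \<Omega> f ubar G"
    and ubar: "ubar \<in> Linfty \<Omega>" "ubar \<in> Uad \<Omega> b"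
    and "1 \<le> p"
    and locmin: "\<exists>\<epsilon>>0. \<forall>u \<in> Uad \<Omega> b. Lp_norm \<Omega> p (\<lambda>x. u x - ubar x) < ereal \<epsilon> \<longrightarrow>
                   f ubar + gfun \<Omega> \<alpha> \<beta> ubar \<le> f u + gfun \<Omega> \<alpha> \<beta> u"
    and expansion: "\<forall>\<epsilon>>0. \<exists>\<delta>>0. \<forall>u \<in> Uad \<Omega> b. L1_norm \<Omega> (\<lambda>x. u x - ubar x) < \<delta> \<longrightarrow>
        \<bar>f u - f ubar - (LINT x|lebesgue_on \<Omega>. G x * (u x - ubar x))\<bar>
          \<le> \<epsilon> * L1_norm \<Omega> (\<lambda>x. u x - ubar x)"
  shows "AE x in lebesgue_on \<Omega>. ubar x \<in> pw_argmin \<alpha> \<beta> b (G x)"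
proof -
  let ?M = "lebesgue_on \<Omega>"
  have Os: "\<Omega> \<in> sets lebesgue" using assms(1) by (metis sets_completionI_sets sets_lborel borel_open)
  have Oi: "\<Omega> \<inter> space lebesgue \<in> sets lebesgue" using Os by simp
  have Of: "\<Omega> \<in> lmeasurable" using assms(2) Os by (rule bounded_set_imp_lmeasurable)
  interpret F: finite_measure ?M using Of by (rule finite_measure_lebesgue_on)
  have ubm[measurable]: "ubar \<in> borel_measurable ?M" and ub2: "integrable ?M (\<lambda>x. (ubar x)^2)"
    using ubar(2) by (auto simp: Uad_def L2_def)
  have ubb: "AE x in ?M. ereal \<bar>ubar x\<bar> \<le> b" using ubar(2) by (auto simp: Uad_def)
  obtain K0 where "AE x in ?M. \<bar>ubar x\<bar> \<le> K0" using ubar(1) by (auto simp: Linfty_def)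
  define K where "K = max K0 0"
  have K0: "K \<ge> 0" by (simp add: K_def)
  have ubK: "AE x in ?M. \<bar>ubar x\<bar> \<le> K" using \<open>AE x in ?M. \<bar>ubar x\<bar> \<le> K0\<close>
    by eventually_elim (auto simp: K_def)
  have Gm[measurable]: "G \<in> borel_measurable ?M" and G2: "integrable ?M (\<lambda>x. (G x)^2)"
    using G by (auto simp: frechet_grad_def L2_def)
  have Gi: "integrable ?M G" by (rule F.square_integrable_imp_integrable[OF Gm G2])
  have L0int: "L0_norm \<Omega> u = (LINT x|?M. card0 (u x))" if um: "u \<in> borel_measurable ?M" for u
  proof -
    have [measurable]: "u \<in> borel_measurable ?M" by (rule um)
    have S: "{x \<in> \<Omega>. u x \<noteq> 0} \<in> sets ?M"
    proof -
      have "{x \<in> space ?M. u x \<noteq> 0} \<in> sets ?M" by measurable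
      thus ?thesis by simp
    qed
    have "(LINT x|?M. card0 (u x)) = (LINT x|?M. indicator {x \<in> \<Omega>. u x \<noteq> 0} x)"
      by (rule Bochner_Integration.integral_cong) (auto simp: card0_def indicator_def)
    also have "\<dots> = measure ?M {x \<in> \<Omega>. u x \<noteq> 0}"
      by (simp add: Int_absorb2[of "{x \<in> \<Omega>. u x \<noteq> 0}" \<Omega>])
    also have "\<dots> = measure lebesgue {x \<in> \<Omega>. u x \<noteq> 0}"
      by (rule measure_restrict_space[OF Oi]) auto
    finally show ?thesis by (simp add: L0_norm_def)
  qed
  have card0m[measurable]: "(\<lambda>x. card0 (u x)) \<in> borel_measurable ?M" if [measurable]: "u \<in> borel_measurable ?M" for u
    unfolding card0_def by measurable
  have card0i: "integrable ?M (\<lambda>x. card0 (u x))" if "u \<in> borel_measurable ?M" for u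
    by (rule Bochner_Integration.integrable_bound[OF F.integrable_const[of "1::real"]]) (use that in \<open>auto simp: card0_def\<close>)
  have g_eq: "gfun \<Omega> \<alpha> \<beta> u = \<alpha>/2 * (LINT x|?M. (u x)^2) + \<beta> * (LINT x|?M. card0 (u x))"
    if "u \<in> L2 \<Omega>" for u
  proof -
    have "(LINT x|?M. (u x)^2) \<ge> 0" by (rule integral_nonneg_AE) auto
    thus ?thesis using that L0int by (simp add: gfun_def L2_norm_def L2_def)
  qed
  have key: "{x \<in> \<Omega>. pw_obj \<alpha> \<beta> (G x) v + \<delta> \<le> pw_obj \<alpha> \<beta> (G x) (ubar x)} \<in> null_sets ?M"
    if vb: "ereal \<bar>v\<bar> \<le> b" and d0: "\<delta> > 0" for v \<delta>
  proof (rule ccontr)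
    define A where "A = {x \<in> \<Omega>. pw_obj \<alpha> \<beta> (G x) v + \<delta> \<le> pw_obj \<alpha> \<beta> (G x) (ubar x)}"
    assume "{x \<in> \<Omega>. pw_obj \<alpha> \<beta> (G x) v + \<delta> \<le> pw_obj \<alpha> \<beta> (G x) (ubar x)} \<notin> null_sets ?M"
    hence An: "A \<notin> null_sets ?M" by (simp add: A_def)
    have AM: "A \<in> sets ?M"
    proof -
      have c0[measurable]: "(\<lambda>x. card0 (ubar x)) \<in> borel_measurable ?M" by (rule card0m[OF ubm])
      have hm[measurable]: "(\<lambda>x. pw_obj \<alpha> \<beta> (G x) (ubar x) - pw_obj \<alpha> \<beta> (G x) v) \<in> borel_measurable ?M"
        unfolding pw_obj_def by measurable
      have "{x \<in> space ?M. \<delta> \<le> pw_obj \<alpha> \<beta> (G x) (ubar x) - pw_obj \<alpha> \<beta> (G x) v} \<in> sets ?M"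
        by measurable
      moreover have "{x \<in> space ?M. \<delta> \<le> pw_obj \<alpha> \<beta> (G x) (ubar x) - pw_obj \<alpha> \<beta> (G x) v} = A"
        by (auto simp: A_def)
      ultimately show ?thesis by simp
    qed
    have AO: "A \<subseteq> \<Omega>" by (auto simp: A_def)
    have AL: "A \<in> sets lebesgue" using AM Oi by (simp add: sets_restrict_space_iff)
    have AnL: "A \<notin> null_sets lebesgue" using An AO Os by (simp add: null_sets_restrict_space)
    define C where "C = \<bar>v\<bar> + K + 1"
    have C0: "C > 0" using K0 by (simp add: C_def)
    obtain el where el: "el > 0" and lm: "\<forall>u \<in> Uad \<Omega> b. Lp_norm \<Omega> p (\<lambda>x. u x - ubar x) < ereal el \<longrightarrow>
                   f ubar + gfun \<Omega> \<alpha> \<beta> ubar \<le> f u + gfun \<Omega> \<alpha> \<beta> u" using locmin by blast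
    define \<epsilon> where "\<epsilon> = \<delta> / (2 * C)"
    have e0: "\<epsilon> > 0" using d0 C0 by (simp add: \<epsilon>_def)
    obtain de where de: "de > 0" and ex: "\<forall>u \<in> Uad \<Omega> b. L1_norm \<Omega> (\<lambda>x. u x - ubar x) < de \<longrightarrow>
        \<bar>f u - f ubar - (LINT x|lebesgue_on \<Omega>. G x * (u x - ubar x))\<bar>
          \<le> \<epsilon> * L1_norm \<Omega> (\<lambda>x. u x - ubar x)" using expansion e0 by blast
    define \<eta> where "\<eta> = min (de / C) (el powr p / C powr p)"
    have eta0: "\<eta> > 0" using de el C0 by (simp add: \<eta>_def)
    obtain E where E: "E \<subseteq> A" "E \<in> sets lebesgue" "0 < measure lebesgue E" "measure lebesgue E < \<eta>"
      using small_subset[OF AL AnL eta0] by blast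
    have EM[measurable]: "E \<in> sets ?M" using E(1,2) AO Oi by (simp add: sets_restrict_space_iff)
    define m where "m = measure ?M E"
    have m_eq: "m = measure lebesgue E" unfolding m_def using E(1) AO by (intro measure_restrict_space[OF Oi]) auto
    define u where "u = (\<lambda>x. if x \<in> E then v else ubar x)"
    have um[measurable]: "u \<in> borel_measurable ?M" unfolding u_def by measurable
    have diff: "u x - ubar x = indicator E x * (v - ubar x)" for x by (simp add: u_def indicator_def)
    have dbound: "AE x in ?M. \<bar>u x - ubar x\<bar> \<le> C * indicator E x"
      using ubK by eventually_elim (auto simp: diff C_def indicator_def)
    have ind_int: "integrable ?M (\<lambda>x. c * indicator E x)" for c :: real
      using integrable_real_mult_indicator[OF EM F.integrable_const[of c]] by simp
    have ind_lint: "(LINT x|?M. c * indicator E x) = c * m" for c :: real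
      using E(1) AO by (simp add: m_def Int_absorb2[of E \<Omega>])
    have u2: "integrable ?M (\<lambda>x. (u x)^2)"
      by (rule Bochner_Integration.integrable_bound[OF Bochner_Integration.integrable_add[OF F.integrable_const[of "v^2"] ub2]])
         (auto simp: u_def)
    have uL2: "u \<in> L2 \<Omega>" using u2 by (simp add: L2_def)
    have uU: "u \<in> Uad \<Omega> b" using uL2 ubb vb unfolding Uad_def
      by (auto elim!: eventually_mono simp: u_def)
    have d_int: "integrable ?M (\<lambda>x. \<bar>u x - ubar x\<bar>)"
      by (rule Bochner_Integration.integrable_bound[OF ind_int[of C]]) (use dbound in \<open>auto elim!: eventually_mono\<close>)
    have L1b: "L1_norm \<Omega> (\<lambda>x. u x - ubar x) \<le> C * m"
      unfolding L1_norm_def ind_lint[symmetric]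
      by (rule integral_mono_AE[OF d_int ind_int dbound])
    have L1nn: "L1_norm \<Omega> (\<lambda>x. u x - ubar x) \<ge> 0" unfolding L1_norm_def by simp
    have "C * m < C * \<eta>" using E(4) m_eq C0 by simp
    also have "C * \<eta> \<le> de" using C0 by (simp add: \<eta>_def min_def field_simps)
    finally have L1s: "L1_norm \<Omega> (\<lambda>x. u x - ubar x) < de" using L1b by simp
    have pbound: "AE x in ?M. \<bar>\<bar>u x - ubar x\<bar> powr p\<bar> \<le> C powr p * indicator E x"
      using dbound
    proof eventually_elim
      case (elim x) thus ?case
        using assms(11) by (cases "x \<in> E") (auto intro!: powr_mono2 simp: diff indicator_def)
    qed
    have p_int: "integrable ?M (\<lambda>x. \<bar>u x - ubar x\<bar> powr p)"
      by (rule Bochner_Integration.integrable_bound[OF ind_int[of "C powr p"]]) (use pbound in \<open>auto elim!: eventually_mono\<close>)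
    have "(LINT x|?M. \<bar>u x - ubar x\<bar> powr p) \<le> C powr p * m"
      unfolding ind_lint[symmetric]
      by (rule integral_mono_AE[OF p_int ind_int]) (use pbound in \<open>auto elim!: eventually_mono\<close>)
    also have "\<dots> < C powr p * \<eta>" using E(4) m_eq C0 by simp
    also have "\<dots> \<le> el powr p" using C0 by (simp add: \<eta>_def min_def field_simps)
    finally have pl: "(LINT x|?M. \<bar>u x - ubar x\<bar> powr p) < el powr p" .
    have "(LINT x|?M. \<bar>u x - ubar x\<bar> powr p) powr (1/p) < (el powr p) powr (1/p)"
      by (rule powr_less_mono2) (use pl assms(11) in auto)
    also have "\<dots> = el" using el assms(11) by (simp add: powr_powr)
    finally have Lps: "Lp_norm \<Omega> p (\<lambda>x. u x - ubar x) < ereal el"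
      using p_int by (simp add: Lp_norm_def)
    have opt: "f ubar + gfun \<Omega> \<alpha> \<beta> ubar \<le> f u + gfun \<Omega> \<alpha> \<beta> u" using lm uU Lps by blast
    have exb: "f u - f ubar - (LINT x|?M. G x * (u x - ubar x)) \<le> \<delta> / 2 * m"
    proof -
      have "f u - f ubar - (LINT x|?M. G x * (u x - ubar x)) \<le> \<epsilon> * L1_norm \<Omega> (\<lambda>x. u x - ubar x)"
        using ex uU L1s by fastforce
      also have "\<dots> \<le> \<epsilon> * (C * m)" using L1b e0 by (simp add: mult_left_mono)
      also have "\<dots> = \<delta> / 2 * m" using C0 by (simp add: \<epsilon>_def)
      finally show ?thesis .
    qed
    have aux: "norm (G x * (u x - ubar x)) \<le> norm (C * \<bar>G x\<bar>)" if "\<bar>u x - ubar x\<bar> \<le> C * indicator E x" for x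
    proof -
      have "\<bar>u x - ubar x\<bar> \<le> C" using that C0 by (cases "x \<in> E") auto
      hence "\<bar>G x\<bar> * \<bar>u x - ubar x\<bar> \<le> \<bar>G x\<bar> * C" by (simp add: mult_left_mono)
      thus ?thesis using C0 by (simp add: abs_mult mult.commute)
    qed
    have Gd_int: "integrable ?M (\<lambda>x. G x * (u x - ubar x))"
      by (rule Bochner_Integration.integrable_bound[OF integrable_mult_right[OF integrable_abs[OF Gi], of C]])
         (use eventually_mono[OF dbound aux] in auto)
    define h where "h = (\<lambda>x. G x * (u x - ubar x) + (\<alpha>/2 * (u x)^2 - \<alpha>/2 * (ubar x)^2) + (\<beta> * card0 (u x) - \<beta> * card0 (ubar x)))"
    have h_int: "integrable ?M h" unfolding h_def
      using Gd_int u2 ub2 card0i[OF um] card0i[OF ubm] by auto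
    have h_lint: "(LINT x|?M. h x) = (LINT x|?M. G x * (u x - ubar x)) + gfun \<Omega> \<alpha> \<beta> u - gfun \<Omega> \<alpha> \<beta> ubar"
    proof -
      have i1: "integrable ?M (\<lambda>x. \<alpha>/2 * (u x)^2 - \<alpha>/2 * (ubar x)^2)" using u2 ub2 by auto
      have i2: "integrable ?M (\<lambda>x. \<beta> * card0 (u x) - \<beta> * card0 (ubar x))"
        using card0i[OF um] card0i[OF ubm] by auto
      have e1: "(LINT x|?M. \<alpha>/2 * (u x)^2 - \<alpha>/2 * (ubar x)^2) = \<alpha>/2 * (LINT x|?M. (u x)^2) - \<alpha>/2 * (LINT x|?M. (ubar x)^2)"
        using u2 ub2 by (simp add: Bochner_Integration.integral_diff)
      have e2: "(LINT x|?M. \<beta> * card0 (u x) - \<beta> * card0 (ubar x)) = \<beta> * (LINT x|?M. card0 (u x)) - \<beta> * (LINT x|?M. card0 (ubar x))"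
        using card0i[OF um] card0i[OF ubm] by (simp add: Bochner_Integration.integral_diff)
      have "(LINT x|?M. G x * (u x - ubar x) + (\<alpha>/2 * (u x)^2 - \<alpha>/2 * (ubar x)^2) + (\<beta> * card0 (u x) - \<beta> * card0 (ubar x)))
          = (LINT x|?M. G x * (u x - ubar x) + (\<alpha>/2 * (u x)^2 - \<alpha>/2 * (ubar x)^2)) + (LINT x|?M. \<beta> * card0 (u x) - \<beta> * card0 (ubar x))"
        by (rule Bochner_Integration.integral_add[OF Bochner_Integration.integrable_add[OF Gd_int i1] i2])
      also have "(LINT x|?M. G x * (u x - ubar x) + (\<alpha>/2 * (u x)^2 - \<alpha>/2 * (ubar x)^2))
          = (LINT x|?M. G x * (u x - ubar x)) + (LINT x|?M. \<alpha>/2 * (u x)^2 - \<alpha>/2 * (ubar x)^2)"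
        by (rule Bochner_Integration.integral_add[OF Gd_int i1])
      finally show ?thesis unfolding h_def e1 e2 g_eq[OF uL2] g_eq[OF ubar(2)[unfolded Uad_def, THEN CollectD, THEN conjunct1]] by simp
    qed
    have h_le: "h x \<le> - \<delta> * indicator E x" if "x \<in> \<Omega>" for x
    proof (cases "x \<in> E")
      case True
      hence "x \<in> A" using E(1) by auto
      hence "pw_obj \<alpha> \<beta> (G x) v + \<delta> \<le> pw_obj \<alpha> \<beta> (G x) (ubar x)" by (simp add: A_def)
      thus ?thesis using True by (simp add: h_def u_def pw_obj_def algebra_simps)
    next
      case False thus ?thesis by (simp add: h_def u_def)
    qed
    have "(LINT x|?M. h x) \<le> - \<delta> * m"
      unfolding ind_lint[symmetric]
      by (rule integral_mono[OF h_int ind_int]) (use h_le in auto)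
    hence "f u + gfun \<Omega> \<alpha> \<beta> u - (f ubar + gfun \<Omega> \<alpha> \<beta> ubar) \<le> \<delta>/2 * m - \<delta> * m"
      using exb h_lint by linarith
    moreover have "m > 0" using E(3) m_eq by simp
    moreover have "\<delta>/2 * m - \<delta> * m = - (\<delta> * m) / 2" by simp
    moreover have "\<delta> * m > 0" using d0 \<open>m > 0\<close> by simp
    ultimately show False using opt by linarith
  qed
  define D where "D = {r \<in> \<rat>. ereal \<bar>r\<bar> \<le> b}"
  have cD: "countable D" using countable_rat by (auto simp: D_def intro: countable_subset)
  have N: "AE x in ?M. \<forall>r\<in>D. \<forall>n::nat. x \<notin> {x \<in> \<Omega>. pw_obj \<alpha> \<beta> (G x) r + 1 / real (Suc n) \<le> pw_obj \<alpha> \<beta> (G x) (ubar x)}"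
  proof (subst AE_ball_countable[OF cD], intro ballI, subst AE_all_countable, intro allI)
    fix r and n :: nat assume "r \<in> D"
    hence "ereal \<bar>r\<bar> \<le> b" by (simp add: D_def)
    show "AE x in ?M. x \<notin> {x \<in> \<Omega>. pw_obj \<alpha> \<beta> (G x) r + 1 / real (Suc n) \<le> pw_obj \<alpha> \<beta> (G x) (ubar x)}"
      by (rule AE_not_in[OF key[OF \<open>ereal \<bar>r\<bar> \<le> b\<close>]]) simp
  qed
  show ?thesis using N ubb AE_space
  proof eventually_elim
    case (elim x)
    hence xO: "x \<in> \<Omega>" by simp
    have H: "pw_obj \<alpha> \<beta> (G x) (ubar x) \<le> pw_obj \<alpha> \<beta> (G x) r" if "r \<in> \<rat>" "ereal \<bar>r\<bar> \<le> b" for r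
    proof (rule ccontr)
      assume "\<not> ?thesis"
      hence "0 < pw_obj \<alpha> \<beta> (G x) (ubar x) - pw_obj \<alpha> \<beta> (G x) r" by simp
      then obtain n where n: "inverse (real (Suc n)) < pw_obj \<alpha> \<beta> (G x) (ubar x) - pw_obj \<alpha> \<beta> (G x) r"
        using reals_Archimedean by blast
      have "r \<in> D" using that by (simp add: D_def)
      hence "\<not> (pw_obj \<alpha> \<beta> (G x) r + 1 / real (Suc n) \<le> pw_obj \<alpha> \<beta> (G x) (ubar x))"
        using elim(1) xO by blast
      thus False using n by (simp add: inverse_eq_divide)
    qed
    show ?case unfolding pw_argmin_def
      using elim(2) pw_dense[OF H _ assms(3)] by blast
  qed
qed

end
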